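(* For all integers $M,N\ge1$, $$d_4^2(M,N)=\beta_4^2(M,N)+\delta_{2|M}\,\frac{(M-2)(N-1)}{M^4N^3},$$ where $\delta_{2|M}=1$ if $M$ is even and $\delta_{2|M}=0$ if $M$ is odd, and $\beta_4^2(M,N)=\delta_4(M,N)+\frac1M(1-\delta_4(M,N))$.
   Context: For integers $M,N,p,r\ge1$, consider triples $(i,a,b)$ with $i\in\mathbb Z_M^r$, $a\in\mathbb Z_M^p$, $b\in\mathbb Z_N^p$, with cyclic conventions $i_{r+1}=i_1$, $b_{p+1}=b_1$. For $x\in\{1,\dots,r\}$, condition $(E_x)$ says that the multisets $\{(i_x+a_y,b_y),(i_{x+1}+a_y,b_{y+1}):y=1,\dots,p\}$ and $\{(i_x+a_y,b_{y+1}),(i_{x+1}+a_y,b_y):y=1,\dots,p\}$ of elements of $\mathbb Z_M\times\mathbb Z_N$ (counted with multiplicity) coincide. Define $d_p^r(M,N)=\frac{1}{M^{p+r}N^p}\#\{(i,a,b):(E_x)\text{ holds for all }x\}$ and $\delta_p(M,N)=\frac{1}{(MN)^p}\#\{(a,b)\in\mathbb Z_M^p\times\mathbb Z_N^p:\{(a_y,b_y)\}_{y=1}^p=\{(a_y,b_{y+1})\}_{y=1}^p\text{ as multisets}\}$. *)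

theory Defs
  imports Main "HOL-Library.Multiset" "HOL-Library.FuncSet" Complex_Main
begin

(* Z_M is represented by {0..<M} with arithmetic mod M; tuples in Z_M^r are
  extensional functions PiE {0..<r} {0..<M}, indexed 0-based, with cyclic
  successor (x+1) mod r. *)

definition cond_E :: "nat \<Rightarrow> nat \<Rightarrow> nat \<Rightarrow> nat \<Rightarrow> (nat \<Rightarrow> nat) \<Rightarrow> (nat \<Rightarrow> nat) \<Rightarrow> (nat \<Rightarrow> nat) \<Rightarrow> nat \<Rightarrow> bool" where
  "cond_E M N p r i a b x \<longleftrightarrow>
     (\<Sum>y<p. {# ((i x + a y) mod M, b y), ((i ((x+1) mod r) + a y) mod M, b ((y+1) mod p)) #})
   = (\<Sum>y<p. {# ((i x + a y) mod M, b ((y+1) mod p)), ((i ((x+1) mod r) + a y) mod M, b y) #})"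

definition d_pr :: "nat \<Rightarrow> nat \<Rightarrow> nat \<Rightarrow> nat \<Rightarrow> real" where
  "d_pr p r M N =
     real (card {(i, a, b). i \<in> {0..<r} \<rightarrow>\<^sub>E {0..<M} \<and> a \<in> {0..<p} \<rightarrow>\<^sub>E {0..<M}
                 \<and> b \<in> {0..<p} \<rightarrow>\<^sub>E {0..<N} \<and> (\<forall>x<r. cond_E M N p r i a b x)})
     / (real M ^ (p + r) * real N ^ p)"

definition delta_p :: "nat \<Rightarrow> nat \<Rightarrow> nat \<Rightarrow> real" where
  "delta_p p M N =
     real (card {(a, b). a \<in> {0..<p} \<rightarrow>\<^sub>E {0..<M} \<and> b \<in> {0..<p} \<rightarrow>\<^sub>E {0..<N}
                 \<and> (\<Sum>y<p. {# (a y, b y) #}) = (\<Sum>y<p. {# (a y, b ((y+1) mod p)) #})})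
     / (real M * real N) ^ p"

definition beta42 :: "nat \<Rightarrow> nat \<Rightarrow> real" where
  "beta42 M N = delta_p 4 M N + (1 / real M) * (1 - delta_p 4 M N)"

end

theory Submission
  imports Defs "HOL-Library.Multiset" "HOL-Library.FuncSet"
begin



lemma decomp_XY: "X = (X \<inter># Y) + (X - Y)"
  by (simp add: multiset_eq_iff min_def)

lemma G0:
  assumes "X + image_mset f Y = Y + image_mset f X"
  shows "image_mset f (X - Y) = X - Y"
proof -
  define I where "I = X \<inter># Y"
  have hx: "X = I + (X - Y)" unfolding I_def by (simp add: multiset_eq_iff min_def)
  have hy: "Y = I + (Y - X)" unfolding I_def by (simp add: multiset_eq_iff min_def)
  have "I + (X - Y) + (image_mset f I + image_mset f (Y - X)) = I + (Y - X) + (image_mset f I + image_mset f (X - Y))"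
    using assms hx hy by (metis image_mset_union)
  hence eq: "(X - Y) + image_mset f (Y - X) = (Y - X) + image_mset f (X - Y)"
    by (simp add: ac_simps)
  have sub: "X - Y \<subseteq># image_mset f (X - Y)"
  proof (rule mset_subset_eqI)
    fix z
    have "count (X - Y) z \<le> count (Y - X) z + count (image_mset f (X - Y)) z"
      using arg_cong[OF eq, of "\<lambda>M. count M z"] by simp
    moreover have "count (X - Y) z = 0 \<or> count (Y - X) z = 0" by auto
    ultimately show "count (X - Y) z \<le> count (image_mset f (X - Y)) z" by linarith
  qed
  show ?thesis
  proof (rule ccontr)
    assume "image_mset f (X - Y) \<noteq> X - Y"
    with sub have "X - Y \<subset># image_mset f (X - Y)" by (simp add: subset_mset.le_less)
    from mset_subset_size[OF this] show False by simp
  qed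
qed



lemma four_eq:
  assumes d: "distinct [p1,p2,p3,p4]" and m: "p1 \<in># B" "p2 \<in># B" "p3 \<in># B" "p4 \<in># B"
    and sz: "size B \<le> 4"
  shows "B = {#p1,p2,p3,p4#}"
proof -
  have s1: "set [p1,p2,p3,p4] \<subseteq> set_mset B" using m by simp
  have "mset [p1,p2,p3,p4] = mset_set (set [p1,p2,p3,p4])" using d by (simp only: mset_set_set)
  moreover have "mset_set (set [p1,p2,p3,p4]) \<subseteq># mset_set (set_mset B)"
    using subset_imp_msubset_mset_set[OF s1] by simp
  moreover have "mset_set (set_mset B) \<subseteq># B" by (rule mset_set_set_mset_msubset)
  ultimately have sub: "mset [p1,p2,p3,p4] \<subseteq># B" by (metis subset_mset.order_trans)
  show ?thesis
  proof (rule ccontr)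
    assume "B \<noteq> {#p1,p2,p3,p4#}"
    with sub have "mset [p1,p2,p3,p4] \<subset># B" by (simp add: subset_mset.le_less)
    from mset_subset_size[OF this] sz show False by simp
  qed
qed

lemma pred_ex:
  assumes "image_mset (\<lambda>z. (s (fst z), snd z)) A = A" "(c, e) \<in># A"
  shows "\<exists>c0. (c0, e) \<in># A \<and> s c0 = c"
proof -
  have "(c, e) \<in># image_mset (\<lambda>z. (s (fst z), snd z)) A" by (subst assms(1)) (rule assms(2))
  then obtain w where w: "w \<in># A" "(c, e) = (s (fst w), snd w)" by (auto simp only: set_image_mset image_iff)
  obtain c0 e0 where "w = (c0, e0)" by (cases w)
  with w show ?thesis by auto
qed

lemma img_mem:
  assumes "image_mset (\<lambda>z. (s (fst z), snd z)) A = A" "(c, e) \<in># A"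
  shows "(s c, e) \<in># A"
proof -
  have "(s c, e) \<in># image_mset (\<lambda>z. (s (fst z), snd z)) A"
    unfolding in_image_mset using assms(2) by force
  thus ?thesis by (subst (asm) assms(1))
qed

lemma L1:
  fixes s :: "'a \<Rightarrow> 'a" and A B :: "('a \<times> 'b) multiset"
  assumes disj: "\<And>z. z \<in># A \<Longrightarrow> z \<notin># B"
    and fA: "image_mset (\<lambda>z. (s (fst z), snd z)) A = A"
    and fB: "image_mset (\<lambda>z. (s (fst z), snd z)) B = B"
    and hfst: "image_mset fst A = image_mset fst B"
    and hsnd: "image_mset snd A = image_mset snd B"
    and sA: "size A \<le> 4" and sB: "size B \<le> 4"
    and nf: "\<And>x. s x \<noteq> x"
    and mem: "(c, e) \<in># A"
  shows "\<exists>c' c2 c2' e3 e4. A = {#(c,e),(c',e),(c2,e4),(c2',e4)#} \<and> B = {#(c2,e),(c2',e),(c,e3),(c',e3)#}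
     \<and> s c = c' \<and> s c' = c \<and> s c2 = c2' \<and> s c2' = c2 \<and> e \<noteq> e3 \<and> e \<noteq> e4
     \<and> c \<noteq> c2 \<and> c \<noteq> c2' \<and> c' \<noteq> c2 \<and> c' \<noteq> c2'"
proof -
  obtain c0 where c0: "(c0, e) \<in># A" "s c0 = c" using pred_ex[OF fA mem] by blast
  have "e \<in># image_mset snd B" using hsnd[symmetric] mem by (metis image_eqI set_image_mset snd_conv hsnd)
  then obtain c2 where c2: "(c2, e) \<in># B" by auto
  obtain c2' where c2': "(c2', e) \<in># B" "s c2' = c2" using pred_ex[OF fB c2] by blast
  have "c \<in># image_mset fst B" using hfst mem by (metis image_eqI set_image_mset fst_conv)
  then obtain e3 where e3: "(c, e3) \<in># B" by auto
  obtain c' where c': "(c', e3) \<in># B" "s c' = c" using pred_ex[OF fB e3] by blast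
  have "c2 \<in># image_mset fst A" using hfst c2 by (metis image_eqI set_image_mset fst_conv)
  then obtain e4 where e4: "(c2, e4) \<in># A" by auto
  obtain c2'' where c2'': "(c2'', e4) \<in># A" "s c2'' = c2" using pred_ex[OF fA e4] by blast
  have ne3: "e \<noteq> e3" using disj[OF mem] e3 by auto
  have ne4: "e \<noteq> e4" using disj[OF e4] c2 by auto
  have nc2: "c2' \<noteq> c2" "c' \<noteq> c" "c0 \<noteq> c" "c2'' \<noteq> c2" using nf c2'(2) c'(2) c0(2) c2''(2) by metis+
  have B: "B = {#(c2,e),(c2',e),(c,e3),(c',e3)#}"
    by (rule four_eq) (use nc2 ne3 c2 c2' e3 c' sB in auto)
  have A: "A = {#(c,e),(c0,e),(c2,e4),(c2'',e4)#}"
    by (rule four_eq) (use nc2 ne4 mem c0 e4 c2'' sA in auto)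
  have "(s c, e) \<in># A" by (rule img_mem[OF fA mem])
  hence sc0: "s c = c0" using A nf[of c] ne4 by auto
  have "(s c, e3) \<in># B" by (rule img_mem[OF fB e3])
  hence scc: "s c = c'" using B nf[of c] ne3 by auto
  have "(s c2, e) \<in># B" by (rule img_mem[OF fB c2])
  hence s2: "s c2 = c2'" using B nf[of c2] ne3 by auto
  have "(s c2, e4) \<in># A" by (rule img_mem[OF fA e4])
  hence s2': "s c2 = c2''" using A nf[of c2] ne4 by auto
  have d1: "c \<noteq> c2" "c \<noteq> c2'" using disj[OF mem] c2 c2' by auto
  have d2: "c0 \<noteq> c2" "c0 \<noteq> c2'" using disj[OF c0(1)] c2 c2' by auto
  have e0: "c0 = c'" using sc0 scc by simp
  have e2: "c2'' = c2'" using s2 s2' by simp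
  have A': "A = {#(c,e),(c',e),(c2,e4),(c2',e4)#}" using A e0 e2 by simp
  have d2': "c' \<noteq> c2" "c' \<noteq> c2'" using d2 e0 by auto
  show ?thesis
    using A' B scc c'(2) s2 c2'(2) ne3 ne4 d1 d2' by blast
qed



lemma FIN:
  fixes s :: "'a \<Rightarrow> 'a"
  assumes nf: "\<And>x. s x \<noteq> x"
    and X: "{#(a0,b0),(a1,b1),(a2,b2),(a3,b3)#} = {#(c,e),(c',e),(c2,e4),(c2',e4)#}"
    and Y: "{#(a0,b1),(a1,b2),(a2,b3),(a3,b0)#} = {#(c2,e),(c2',e),(c,e3),(c',e3)#}"
    and h: "s c = c'" "s c' = c" "s c2 = c2'" "s c2' = c2" "e \<noteq> e3" "e \<noteq> e4"
      "c \<noteq> c2" "c \<noteq> c2'" "c' \<noteq> c2" "c' \<noteq> c2'"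
  shows "b0 = b2 \<and> b1 = b3 \<and> b0 \<noteq> b1 \<and> a2 = s a0 \<and> a3 = s a1 \<and> s (s a0) = a0 \<and> a1 \<noteq> a0 \<and> a1 \<noteq> s a0"
proof -
  have cc: "c \<noteq> c'" "c2 \<noteq> c2'" using nf h by metis+
  have dR: "distinct [(c,e),(c',e),(c2,e4),(c2',e4)]" using cc h by auto
  have "mset [(a0,b0),(a1,b1),(a2,b2),(a3,b3)] = mset [(c,e),(c',e),(c2,e4),(c2',e4)]" using X by simp
  hence dL: "distinct [(a0,b0),(a1,b1),(a2,b2),(a3,b3)]" using dR mset_eq_imp_distinct_iff by blast
  have sX: "set [(a0,b0),(a1,b1),(a2,b2),(a3,b3)] = set [(c,e),(c',e),(c2,e4),(c2',e4)]"
    using arg_cong[OF X, of set_mset] by simp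
  have sY: "set [(a0,b1),(a1,b2),(a2,b3),(a3,b0)] = set [(c2,e),(c2',e),(c,e3),(c',e3)]"
    using arg_cong[OF Y, of set_mset] by simp
  have P: "\<And>u v w. (u, v) \<in> set [(c,e),(c',e),(c2,e4),(c2',e4)] \<Longrightarrow> (u, w) \<in> set [(c2,e),(c2',e),(c,e3),(c',e3)] \<Longrightarrow>
      ((u = c \<or> u = c') \<and> v = e \<and> w = e3) \<or> ((u = c2 \<or> u = c2') \<and> v = e4 \<and> w = e)"
    using cc h(5-10) by (simp only: set_simps insert_iff empty_iff prod.inject) blast
  have p0: "((a0 = c \<or> a0 = c') \<and> b0 = e \<and> b1 = e3) \<or> ((a0 = c2 \<or> a0 = c2') \<and> b0 = e4 \<and> b1 = e)"
    by (rule P; rule subsetD[OF equalityD1[OF sX]] subsetD[OF equalityD1[OF sY]]; simp)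
  have p1: "((a1 = c \<or> a1 = c') \<and> b1 = e \<and> b2 = e3) \<or> ((a1 = c2 \<or> a1 = c2') \<and> b1 = e4 \<and> b2 = e)"
    by (rule P; rule subsetD[OF equalityD1[OF sX]] subsetD[OF equalityD1[OF sY]]; simp)
  have p2: "((a2 = c \<or> a2 = c') \<and> b2 = e \<and> b3 = e3) \<or> ((a2 = c2 \<or> a2 = c2') \<and> b2 = e4 \<and> b3 = e)"
    by (rule P; rule subsetD[OF equalityD1[OF sX]] subsetD[OF equalityD1[OF sY]]; simp)
  have p3: "((a3 = c \<or> a3 = c') \<and> b3 = e \<and> b0 = e3) \<or> ((a3 = c2 \<or> a3 = c2') \<and> b3 = e4 \<and> b0 = e)"
    by (rule P; rule subsetD[OF equalityD1[OF sX]] subsetD[OF equalityD1[OF sY]]; simp)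
  show ?thesis using p0 p1 p2 p3 dL h cc by auto
qed


lemma FW:
  fixes s :: "'a \<Rightarrow> 'a"
  assumes nf: "\<And>x. s x \<noteq> x"
    and eq: "X + image_mset (\<lambda>z. (s (fst z), snd z)) Y = Y + image_mset (\<lambda>z. (s (fst z), snd z)) X"
    and X: "X = {#(a0,b0),(a1,b1),(a2,b2),(a3,b3)#}"
    and Y: "Y = {#(a0,b1),(a1,b2),(a2,b3),(a3,b0)#}"
    and ne: "X \<noteq> Y"
  shows "b0 = b2 \<and> b1 = b3 \<and> b0 \<noteq> b1 \<and> a2 = s a0 \<and> a3 = s a1 \<and> s (s a0) = a0 \<and> a1 \<noteq> a0 \<and> a1 \<noteq> s a0"
proof -
  define A where "A = X - Y"
  define B where "B = Y - X"
  define I where "I = X \<inter># Y"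
  have fA: "image_mset (\<lambda>z. (s (fst z), snd z)) A = A" unfolding A_def by (rule G0[OF eq])
  have fB: "image_mset (\<lambda>z. (s (fst z), snd z)) B = B" unfolding B_def by (rule G0) (use eq in simp)
  have disj: "\<And>z. z \<in># A \<Longrightarrow> z \<notin># B" unfolding A_def B_def by (simp add: in_diff_count)
  have hx: "X = I + A" unfolding I_def A_def by (simp add: multiset_eq_iff min_def)
  have hy: "Y = I + B" unfolding I_def B_def by (simp add: multiset_eq_iff min_def)
  have "image_mset fst X = image_mset fst Y" using X Y by simp
  hence hfst: "image_mset fst A = image_mset fst B" using hx hy by simp
  have "image_mset snd X = image_mset snd Y" using X Y by (simp add: add_mset_commute)
  hence hsnd: "image_mset snd A = image_mset snd B" using hx hy by simp
  have szX: "size X = 4" "size Y = 4" using X Y by simp_all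
  have sA: "size A \<le> 4" "size B \<le> 4" using szX hx hy by simp_all
  have sAB: "size A = size B" using szX hx hy by simp
  have "A \<noteq> {#}"
  proof
    assume "A = {#}"
    hence "B = {#}" using sAB by simp
    with \<open>A = {#}\<close> hx hy ne show False by simp
  qed
  then obtain z where "z \<in># A" by (meson multiset_nonemptyE)
  then obtain c e where mem: "(c, e) \<in># A" by (cases z) auto
  obtain c' c2 c2' e3 e4 where
    AB: "A = {#(c,e),(c',e),(c2,e4),(c2',e4)#}" "B = {#(c2,e),(c2',e),(c,e3),(c',e3)#}"
    and h: "s c = c'" "s c' = c" "s c2 = c2'" "s c2' = c2" "e \<noteq> e3" "e \<noteq> e4"
      "c \<noteq> c2" "c \<noteq> c2'" "c' \<noteq> c2" "c' \<noteq> c2'"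
    using L1[OF disj fA fB hfst hsnd sA nf mem] by blast
  have "I = {#}" using szX hx AB by simp
  hence "X = A" "Y = B" using hx hy by simp_all
  hence XA: "{#(a0,b0),(a1,b1),(a2,b2),(a3,b3)#} = {#(c,e),(c',e),(c2,e4),(c2',e4)#}"
    and YB: "{#(a0,b1),(a1,b2),(a2,b3),(a3,b0)#} = {#(c2,e),(c2',e),(c,e3),(c',e3)#}"
    using X Y AB by simp_all
  show ?thesis by (rule FIN[OF nf XA YB h])
qed



lemma four_set: "{..<(4::nat)} = {0,1,2,3}" by auto
lemma mods4: "((0::nat) + 1) mod 4 = 1" "((1::nat) + 1) mod 4 = 2" "((2::nat) + 1) mod 4 = 3" "((3::nat) + 1) mod 4 = 0"
  by simp_all

lemma sumM1: "(\<Sum>y<(4::nat). {#f y#}) = {#f 0, f 1, f 2, f 3#}"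
  unfolding four_set by (simp add: add_mset_commute)
lemma sumM2: "(\<Sum>y<(4::nat). {#f y, g y#}) = {#f 0, g 0, f 1, g 1, f 2, g 2, f 3, g 3#}"
  unfolding four_set by (simp add: add_mset_commute)

definition Ct :: "nat \<Rightarrow> nat \<Rightarrow> (nat \<Rightarrow> nat) \<Rightarrow> (nat \<Rightarrow> nat) \<Rightarrow> bool" where
  "Ct M t a b \<longleftrightarrow> (\<Sum>y<4. {# (a y, b y), ((t + a y) mod M, b ((y+1) mod 4)) #})
                = (\<Sum>y<4. {# (a y, b ((y+1) mod 4)), ((t + a y) mod M, b y) #})"

definition Dl :: "(nat \<Rightarrow> nat) \<Rightarrow> (nat \<Rightarrow> nat) \<Rightarrow> bool" where
  "Dl a b \<longleftrightarrow> (\<Sum>y<4. {# (a y, b y) #}) = (\<Sum>y<(4::nat). {# (a y, b ((y+1) mod 4)) #})"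

lemma Dl_eq: "Dl a b \<longleftrightarrow> {#(a 0,b 0),(a 1,b 1),(a 2,b 2),(a 3,b 3)#} = {#(a 0,b 1),(a 1,b 2),(a 2,b 3),(a 3,b 0)#}"
  unfolding Dl_def sumM1 mods4 ..

lemma Ct_eq:
  fixes M t :: nat
  defines "s \<equiv> \<lambda>x. (t + x mod M) mod M"
  assumes a: "a 0 < M" "a 1 < M" "a 2 < M" "a 3 < M"
  shows "Ct M t a b \<longleftrightarrow>
    {#(a 0,b 0),(a 1,b 1),(a 2,b 2),(a 3,b 3)#} + image_mset (\<lambda>z. (s (fst z), snd z)) {#(a 0,b 1),(a 1,b 2),(a 2,b 3),(a 3,b 0)#}
  = {#(a 0,b 1),(a 1,b 2),(a 2,b 3),(a 3,b 0)#} + image_mset (\<lambda>z. (s (fst z), snd z)) {#(a 0,b 0),(a 1,b 1),(a 2,b 2),(a 3,b 3)#}"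
  unfolding Ct_def sumM2 s_def mods4 using a by (simp add: add_mset_commute)

lemma s_nf: "0 < t \<Longrightarrow> t < (M::nat) \<Longrightarrow> (t + x mod M) mod M \<noteq> x"
proof
  assume t: "0 < t" "t < M" and h: "(t + x mod M) mod M = x"
  hence xM: "x < M" by (metis mod_less_divisor less_trans)
  hence "(t + x) mod M = x" using h by simp
  moreover have "(t + x) mod M = (if t + x < M then t + x else t + x - M)"
    using xM t by (simp add: mod_if)
  ultimately show False using t xM by (auto split: if_splits)
qed



definition pat :: "nat \<Rightarrow> nat \<Rightarrow> (nat \<Rightarrow> nat) \<Rightarrow> (nat \<Rightarrow> nat) \<Rightarrow> bool" where
  "pat M t a b \<longleftrightarrow> 2*t = M \<and> b 0 = b 2 \<and> b 1 = b 3 \<and> b 0 \<noteq> b 1 \<and> a 2 = (t + a 0) mod M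
     \<and> a 3 = (t + a 1) mod M \<and> a 1 \<noteq> a 0 \<and> a 1 \<noteq> (t + a 0) mod M"

lemma ss_id: "2*t = (M::nat) \<Longrightarrow> x < M \<Longrightarrow> (t + (t + x) mod M) mod M = x"
proof -
  assume h: "2*t = M" "x < M"
  have "(t + (t + x) mod M) mod M = (t + (t + x)) mod M" by (simp add: mod_add_right_eq)
  also have "t + (t + x) = x + M" using h by simp
  finally show ?thesis using h by simp
qed

lemma two_t:
  assumes t: "0 < t" "t < (M::nat)" and x: "x < M" and h: "(t + (t + x) mod M) mod M = x"
  shows "2*t = M"
proof -
  have "(t + (t + x) mod M) mod M = (2*t + x) mod M" by (simp add: mod_add_right_eq add.assoc[symmetric] mult_2)
  hence "(2*t + x) mod M = x mod M" using h x by simp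
  hence "M dvd (2*t + x) - x" by (subst mod_eq_dvd_iff_nat[symmetric]) auto
  hence "M dvd 2*t" by simp
  then obtain k where k: "2*t = M*k" by (auto elim: dvdE)
  show ?thesis
  proof (cases k)
    case 0 thus ?thesis using k t by simp
  next
    case (Suc j)
    show ?thesis
    proof (cases j)
      case 0 thus ?thesis using k Suc by simp
    next
      case (Suc i)
      hence "2*t \<ge> 2*M" using k \<open>k = Suc j\<close> by simp
      thus ?thesis using t by simp
    qed
  qed
qed

lemma char:
  assumes t: "0 < t" "t < M" and a: "a 0 < M" "a 1 < M" "a 2 < M" "a 3 < M"
  shows "Ct M t a b \<longleftrightarrow> Dl a b \<or> pat M t a b"
proof
  assume C: "Ct M t a b"
  show "Dl a b \<or> pat M t a b"
  proof (cases "Dl a b")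
    case True thus ?thesis by simp
  next
    case False
    hence nD: "\<not> Dl a b" .
    define s where "s = (\<lambda>x. (t + x mod M) mod M)"
    have nf: "\<And>x. s x \<noteq> x" unfolding s_def using s_nf[OF t] by blast
    have eq: "{#(a 0,b 0),(a 1,b 1),(a 2,b 2),(a 3,b 3)#} + image_mset (\<lambda>z. (s (fst z), snd z)) {#(a 0,b 1),(a 1,b 2),(a 2,b 3),(a 3,b 0)#}
      = {#(a 0,b 1),(a 1,b 2),(a 2,b 3),(a 3,b 0)#} + image_mset (\<lambda>z. (s (fst z), snd z)) {#(a 0,b 0),(a 1,b 1),(a 2,b 2),(a 3,b 3)#}"
      using C Ct_eq[OF a, of t b] unfolding s_def by simp
    have ne: "{#(a 0,b 0),(a 1,b 1),(a 2,b 2),(a 3,b 3)#} \<noteq> {#(a 0,b 1),(a 1,b 2),(a 2,b 3),(a 3,b 0)#}"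
      using nD Dl_eq by blast
    have R: "b 0 = b 2 \<and> b 1 = b 3 \<and> b 0 \<noteq> b 1 \<and> a 2 = s (a 0) \<and> a 3 = s (a 1) \<and> s (s (a 0)) = a 0 \<and> a 1 \<noteq> a 0 \<and> a 1 \<noteq> s (a 0)"
      by (rule FW[OF nf eq refl refl ne])
    have sa: "s (a 0) = (t + a 0) mod M" "s (a 1) = (t + a 1) mod M" using a unfolding s_def by simp_all
    have "(t + (t + a 0) mod M) mod M = a 0" using R sa unfolding s_def by simp
    hence "2*t = M" by (rule two_t[OF t a(1)])
    hence "pat M t a b" using R sa unfolding pat_def by simp
    thus ?thesis by simp
  qed
next
  assume "Dl a b \<or> pat M t a b"
  thus "Ct M t a b"
  proof
    assume "Dl a b"
    thus ?thesis unfolding Ct_eq[OF a] Dl_eq by simp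
  next
    assume P: "pat M t a b"
    hence h2: "2*t = M" unfolding pat_def by simp
    have e1: "(t + (t + a 0) mod M) mod M = a 0" "(t + (t + a 1) mod M) mod M = a 1"
      using ss_id[OF h2] a by simp_all
    have "(t + a 2 mod M) mod M = a 0" "(t + a 3 mod M) mod M = a 1"
      using P e1 a unfolding pat_def by simp_all
    thus ?thesis unfolding Ct_eq[OF a] using P a unfolding pat_def by (simp add: add_mset_commute)
  qed
qed

lemma pat_nD:
  assumes a: "a 0 < M" "a 1 < M" and P: "pat M t a b"
  shows "\<not> Dl a b"
proof
  assume "Dl a b"
  hence eq: "{#(a 0,b 0),(a 1,b 1),(a 2,b 2),(a 3,b 3)#} = {#(a 0,b 1),(a 1,b 2),(a 2,b 3),(a 3,b 0)#}"
    using Dl_eq by blast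
  have h2: "2*t = M" using P unfolding pat_def by simp
  have "(a 0, b 0) \<in># {#(a 0,b 1),(a 1,b 2),(a 2,b 3),(a 3,b 0)#}" unfolding eq[symmetric] by simp
  moreover have "a 3 \<noteq> a 0"
  proof
    assume "a 3 = a 0"
    hence "(t + (t + a 1) mod M) mod M = (t + a 0) mod M" using P unfolding pat_def by simp
    thus False using ss_id[OF h2 a(2)] P unfolding pat_def by simp
  qed
  ultimately show False using P unfolding pat_def by auto
qed



lemma mod_back: "u < M \<Longrightarrow> v < (M::nat) \<Longrightarrow> ((u + v) mod M + M - u) mod M = v"
proof (cases "u + v < M")
  case True
  assume "u < M" "v < M"
  hence "(u + v) mod M + M - u = v + M" using True by simp
  thus ?thesis using \<open>v < M\<close> by simp
next
  case False
  assume h: "u < M" "v < M"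
  hence "(u + v) mod M = u + v - M" using False by (simp add: mod_if)
  hence "(u + v) mod M + M - u = v" using False by simp
  thus ?thesis using h by simp
qed

lemma mod_fwd: "u < M \<Longrightarrow> v < (M::nat) \<Longrightarrow> (u + (v + M - u) mod M) mod M = v"
proof -
  assume h: "u < M" "v < M"
  have "(u + (v + M - u) mod M) mod M = (u + (v + M - u)) mod M" by (simp add: mod_add_right_eq)
  also have "u + (v + M - u) = v + M" using h by simp
  finally show ?thesis using h by simp
qed

lemma shift_mod: "u < M \<Longrightarrow> ((v + M - u) mod M + (u + x) mod M) mod M = (v + x) mod (M::nat)"
proof -
  assume h: "u < M"
  have "((v + M - u) mod M + (u + x) mod M) mod M = ((v + M - u) + (u + x)) mod M" by (simp add: mod_add_eq)
  also have "(v + M - u) + (u + x) = (v + x) + M" using h by simp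
  finally show ?thesis by simp
qed

lemma sum_rot:
  assumes "u < (M::nat)"
  shows "(\<Sum>v<M. g ((v + M - u) mod M)) = (\<Sum>t<M. g t)"
proof -
  have "bij_betw (\<lambda>v. (v + M - u) mod M) {..<M} {..<M}"
  proof (rule bij_betw_byWitness[where f' = "\<lambda>t. (t + u) mod M"])
    show "\<forall>v\<in>{..<M}. ((v + M - u) mod M + u) mod M = v"
      using mod_fwd[OF assms] by (simp add: add.commute)
    show "\<forall>t\<in>{..<M}. ((t + u) mod M + M - u) mod M = t"
    proof
      fix t assume "t \<in> {..<M}"
      thus "((t + u) mod M + M - u) mod M = t" using mod_back[OF assms, of t] by (simp add: add.commute)
    qed
  qed (use assms in auto)
  from sum.reindex_bij_betw[OF this, of g] show ?thesis by simp
qed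

lemma sum_PI:
  fixes g :: "nat \<Rightarrow> nat"
  shows "(\<Sum>i\<in>{0..<2::nat} \<rightarrow>\<^sub>E {0..<M}. g ((i 1 + M - i 0) mod M)) = M * (\<Sum>t<M. g t)"
proof -
  define F where "F = (\<lambda>(u::nat, v::nat). restrict (\<lambda>x. if x = 0 then u else v) {0..<2::nat})"
  have Fv: "\<And>u v x. F (u,v) x = (if x \<in> {0..<2} then (if x = 0 then u else v) else undefined)"
    unfolding F_def by simp
  have Fs: "\<And>u v. F (u,v) 0 = u" "\<And>u v. F (u,v) 1 = v" "\<And>u v. F (u,v) (Suc 0) = v" using Fv by simp_all
  have bij: "bij_betw F ({..<M} \<times> {..<M}) ({0..<2} \<rightarrow>\<^sub>E {0..<M})"
  proof (rule bij_betw_byWitness[where f' = "\<lambda>i. (i 0, i 1)"])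
    show "\<forall>p\<in>{..<M} \<times> {..<M}. (F p 0, F p 1) = p" using Fs by auto
    show "\<forall>i\<in>{0..<2} \<rightarrow>\<^sub>E {0..<M}. F (i 0, i 1) = i"
    proof
      fix i :: "nat \<Rightarrow> nat" assume i: "i \<in> {0..<2} \<rightarrow>\<^sub>E {0..<M}"
      show "F (i 0, i 1) = i"
      proof
        fix x :: nat
        show "F (i 0, i 1) x = i x"
        proof (cases "x < 2")
          case True
          hence "x = 0 \<or> x = 1" by auto
          thus ?thesis using Fs by auto
        next
          case False
          hence "x \<notin> {0..<2}" by simp
          thus ?thesis using PiE_arb[OF i] Fv by simp
        qed
      qed
    qed
    show "F ` ({..<M} \<times> {..<M}) \<subseteq> {0..<2} \<rightarrow>\<^sub>E {0..<M}"
    proof (clarify)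
      fix u v assume "u < M" "v < M"
      thus "F (u, v) \<in> {0..<2} \<rightarrow>\<^sub>E {0..<M}" unfolding PiE_def Pi_def extensional_def Fv by auto
    qed
    show "(\<lambda>i. (i 0, i 1)) ` ({0..<2::nat} \<rightarrow>\<^sub>E {0..<M}) \<subseteq> {..<M} \<times> {..<M}" by auto
  qed
  have "(\<Sum>i\<in>{0..<2::nat} \<rightarrow>\<^sub>E {0..<M}. g ((i 1 + M - i 0) mod M)) = (\<Sum>p\<in>{..<M} \<times> {..<M}. g ((F p 1 + M - F p 0) mod M))"
    using sum.reindex_bij_betw[OF bij, of "\<lambda>i. g ((i 1 + M - i 0) mod M)"] by simp
  also have "\<dots> = (\<Sum>u<M. \<Sum>v<M. g ((v + M - u) mod M))"
  proof -
    have "(\<Sum>p\<in>{..<M} \<times> {..<M}. g ((F p 1 + M - F p 0) mod M)) = (\<Sum>p\<in>{..<M} \<times> {..<M}. g ((snd p + M - fst p) mod M))"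
      by (rule sum.cong) (auto simp: Fs)
    thus ?thesis by (simp add: sum.cartesian_product case_prod_beta)
  qed
  also have "\<dots> = (\<Sum>u<M. \<Sum>t<M. g t)" by (rule sum.cong[OF refl]) (simp add: sum_rot)
  also have "\<dots> = M * (\<Sum>t<M. g t)" by simp
  finally show ?thesis .
qed



definition mk4 :: "nat \<Rightarrow> nat \<Rightarrow> nat \<Rightarrow> nat \<Rightarrow> nat \<Rightarrow> nat" where
  "mk4 w x y z = restrict (\<lambda>i. if i = 0 then w else if i = 1 then x else if i = 2 then y else z) {0..<4}"

lemma mk4_simps[simp]: "mk4 w x y z 0 = w" "mk4 w x y z 1 = x" "mk4 w x y z 2 = y" "mk4 w x y z 3 = z" "mk4 w x y z (Suc 0) = x"
  unfolding mk4_def by simp_all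

lemma mk4_PiE: "w \<in> S \<Longrightarrow> x \<in> S \<Longrightarrow> y \<in> S \<Longrightarrow> z \<in> S \<Longrightarrow> mk4 w x y z \<in> {0..<4} \<rightarrow>\<^sub>E S"
  unfolding mk4_def by auto

lemma four_cases: "(i::nat) < 4 \<Longrightarrow> i = 0 \<or> i = 1 \<or> i = 2 \<or> i = 3" by auto

lemma PiE_mk4:
  assumes a: "a \<in> {0..<4} \<rightarrow>\<^sub>E S"
  shows "a = mk4 (a 0) (a 1) (a 2) (a 3)"
proof
  fix i :: nat
  show "a i = mk4 (a 0) (a 1) (a 2) (a 3) i"
  proof (cases "i < 4")
    case True
    thus ?thesis using four_cases[OF True] by auto
  next
    case False
    hence "i \<notin> {0..<4}" by simp
    thus ?thesis using PiE_arb[OF a] unfolding mk4_def by simp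
  qed
qed

lemma PiE_lt: "a \<in> {0..<4::nat} \<rightarrow>\<^sub>E {0..<M} \<Longrightarrow> a 0 < M \<and> a 1 < M \<and> a 2 < M \<and> (a 3::nat) < M"
  by (auto simp: PiE_iff)

definition K :: "nat \<Rightarrow> nat \<Rightarrow> nat \<Rightarrow> ((nat \<Rightarrow> nat) \<times> (nat \<Rightarrow> nat)) set" where
  "K M N t = {(a, b). a \<in> {0..<4} \<rightarrow>\<^sub>E {0..<M} \<and> b \<in> {0..<4} \<rightarrow>\<^sub>E {0..<N} \<and> Ct M t a b}"

definition Dset :: "nat \<Rightarrow> nat \<Rightarrow> ((nat \<Rightarrow> nat) \<times> (nat \<Rightarrow> nat)) set" where
  "Dset M N = {(a, b). a \<in> {0..<4} \<rightarrow>\<^sub>E {0..<M} \<and> b \<in> {0..<4} \<rightarrow>\<^sub>E {0..<N}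
                 \<and> (\<Sum>y<4. {# (a y, b y) #}) = (\<Sum>y<4. {# (a y, b ((y+1) mod 4)) #})}"

definition Sp :: "nat \<Rightarrow> nat \<Rightarrow> nat \<Rightarrow> ((nat \<Rightarrow> nat) \<times> (nat \<Rightarrow> nat)) set" where
  "Sp M N t = {(a, b). a \<in> {0..<4} \<rightarrow>\<^sub>E {0..<M} \<and> b \<in> {0..<4} \<rightarrow>\<^sub>E {0..<N} \<and> pat M t a b}"

lemma fin_PP: "finite (({0..<4::nat} \<rightarrow>\<^sub>E {0..<M::nat}) \<times> ({0..<4::nat} \<rightarrow>\<^sub>E {0..<N::nat}))"
  by (simp add: finite_PiE)

lemma card_PP: "card (({0..<4::nat} \<rightarrow>\<^sub>E {0..<M::nat}) \<times> ({0..<4::nat} \<rightarrow>\<^sub>E {0..<N::nat})) = M^4 * N^4"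
  by (simp add: card_cartesian_product card_PiE)

lemma card_K0: "card (K M N 0) = M^4 * N^4"
proof -
  have "K M N 0 = ({0..<4::nat} \<rightarrow>\<^sub>E {0..<M}) \<times> ({0..<4::nat} \<rightarrow>\<^sub>E {0..<N})"
  proof (auto simp: K_def)
    fix a b :: "nat \<Rightarrow> nat" assume a: "a \<in> {0..<4} \<rightarrow>\<^sub>E {0..<M}"
    show "Ct M 0 a b" using PiE_lt[OF a] by (subst Ct_eq) (auto simp: add_mset_commute)
  qed
  thus ?thesis using card_PP by simp
qed

lemma Dset_Dl: "Dset M N = {(a, b). a \<in> {0..<4} \<rightarrow>\<^sub>E {0..<M} \<and> b \<in> {0..<4} \<rightarrow>\<^sub>E {0..<N} \<and> Dl a b}"
  unfolding Dset_def Dl_def by simp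

lemma card_Kt:
  assumes t: "0 < t" "t < M"
  shows "card (K M N t) = card (Dset M N) + card (Sp M N t)"
proof -
  have "K M N t = Dset M N \<union> Sp M N t"
    unfolding K_def Dset_Dl Sp_def using char[OF t] PiE_lt by blast
  moreover have "Dset M N \<inter> Sp M N t = {}"
    unfolding Dset_Dl Sp_def using pat_nD PiE_lt by blast
  moreover have "finite (Dset M N)" "finite (Sp M N t)"
    unfolding Dset_Dl Sp_def by (rule finite_subset[OF _ fin_PP]; blast)+
  ultimately show ?thesis by (simp add: card_Un_disjoint)
qed



lemma card_Sp:
  assumes t: "0 < t" "t < M"
  shows "card (Sp M N t) = (if 2*t = M then M*(M-2)*(N*(N-1)) else 0)"
proof (cases "2*t = M")
  case False
  hence "Sp M N t = {}" unfolding Sp_def pat_def by auto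
  thus ?thesis using False by simp
next
  case h2: True
  define s where "s = (\<lambda>x. (t + x) mod M)"
  define DA where "DA = Sigma {..<M} (\<lambda>a0. {..<M} - {a0, s a0})"
  define DB where "DB = Sigma {..<N} (\<lambda>b0. {..<N} - {b0})"
  define G where "G = (\<lambda>(p::nat\<times>nat, q::nat\<times>nat). (mk4 (fst p) (snd p) (s (fst p)) (s (snd p)), mk4 (fst q) (snd q) (fst q) (snd q)))"
  have sne: "\<And>x. x < M \<Longrightarrow> s x \<noteq> x" unfolding s_def using s_nf[OF t] by (metis mod_less)
  have sM: "\<And>x. s x < M" unfolding s_def using t by simp
  have cA: "card DA = M * (M - 2)"
  proof -
    have "\<And>a0. a0 \<in> {..<M} \<Longrightarrow> card ({..<M} - {a0, s a0}) = M - 2"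
    proof -
      fix a0 assume "a0 \<in> {..<M}"
      hence "{a0, s a0} \<subseteq> {..<M}" using sM by auto
      moreover have "card {a0, s a0} = 2" using sne[of a0] \<open>a0 \<in> {..<M}\<close> by (simp add: card_insert_if)
      ultimately show "card ({..<M} - {a0, s a0}) = M - 2" by (simp add: card_Diff_subset)
    qed
    thus ?thesis unfolding DA_def by (simp add: card_SigmaI)
  qed
  have cB: "card DB = N * (N - 1)"
  proof -
    have "\<And>b0. b0 \<in> {..<N} \<Longrightarrow> card ({..<N} - {b0}) = N - 1" by simp
    thus ?thesis unfolding DB_def by (simp add: card_SigmaI)
  qed
  have inj: "inj_on G (DA \<times> DB)"
  proof (rule inj_onI)
    fix x y assume "x \<in> DA \<times> DB" "y \<in> DA \<times> DB" and e: "G x = G y"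
    obtain p q where x: "x = (p, q)" by (cases x)
    obtain p' q' where y: "y = (p', q')" by (cases y)
    have "mk4 (fst p) (snd p) (s (fst p)) (s (snd p)) = mk4 (fst p') (snd p') (s (fst p')) (s (snd p'))"
         "mk4 (fst q) (snd q) (fst q) (snd q) = mk4 (fst q') (snd q') (fst q') (snd q')"
      using e unfolding x y G_def by simp_all
    hence "fst p = fst p'" "snd p = snd p'" "fst q = fst q'" "snd q = snd q'"
      by (metis mk4_simps(1), metis mk4_simps(2), metis mk4_simps(1), metis mk4_simps(2))
    thus "x = y" unfolding x y by (simp add: prod_eq_iff)
  qed
  have img: "G ` (DA \<times> DB) = Sp M N t"
  proof
    show "G ` (DA \<times> DB) \<subseteq> Sp M N t"
    proof
      fix x assume "x \<in> G ` (DA \<times> DB)"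
      then obtain a0 a1 b0 b1 where x: "x = G ((a0,a1),(b0,b1))" and "((a0, a1), (b0, b1)) \<in> DA \<times> DB" by auto
      hence h: "a0 < M" "a1 < M" "a1 \<noteq> a0" "a1 \<noteq> s a0" "b0 < N" "b1 < N" "b1 \<noteq> b0"
        unfolding DA_def DB_def by auto
      have m1: "mk4 a0 a1 (s a0) (s a1) \<in> {0..<4} \<rightarrow>\<^sub>E {0..<M}" using h sM by (intro mk4_PiE) auto
      have m2: "mk4 b0 b1 b0 b1 \<in> {0..<4} \<rightarrow>\<^sub>E {0..<N}" using h by (intro mk4_PiE) auto
      have "pat M t (mk4 a0 a1 (s a0) (s a1)) (mk4 b0 b1 b0 b1)"
        unfolding pat_def using h h2 unfolding s_def by simp
      thus "x \<in> Sp M N t"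
        unfolding x G_def Sp_def using m1 m2 by simp
    qed
    show "Sp M N t \<subseteq> G ` (DA \<times> DB)"
    proof
      fix x assume "x \<in> Sp M N t"
      then obtain a b where x: "x = (a, b)" and "(a, b) \<in> Sp M N t" by (cases x) auto
      hence a: "a \<in> {0..<4} \<rightarrow>\<^sub>E {0..<M}" and b: "b \<in> {0..<4} \<rightarrow>\<^sub>E {0..<N}" and P: "pat M t a b"
        unfolding Sp_def by auto
      have ea: "a = mk4 (a 0) (a 1) (s (a 0)) (s (a 1))" using PiE_mk4[OF a] P unfolding pat_def s_def by simp
      have eb: "b = mk4 (b 0) (b 1) (b 0) (b 1)" using PiE_mk4[OF b] P unfolding pat_def by simp
      have "((a 0, a 1), (b 0, b 1)) \<in> DA \<times> DB"
        using PiE_lt[OF a] PiE_lt[OF b] P unfolding DA_def DB_def pat_def s_def by auto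
      moreover have "(a, b) = G ((a 0, a 1), (b 0, b 1))" unfolding G_def using ea eb by simp
      ultimately show "x \<in> G ` (DA \<times> DB)" unfolding x by blast
    qed
  qed
  have "card (Sp M N t) = card (DA \<times> DB)" using card_image[OF inj] img by simp
  also have "\<dots> = M*(M-2)*(N*(N-1))" using cA cB by (simp add: card_cartesian_product)
  finally show ?thesis using h2 by simp
qed



lemma condE_0: "(\<forall>x<2. cond_E M N 4 2 i a b x) \<longleftrightarrow> cond_E M N 4 2 i a b 0"
proof -
  have "(\<forall>x<2. cond_E M N 4 2 i a b x) \<longleftrightarrow> cond_E M N 4 2 i a b 0 \<and> cond_E M N 4 2 i a b 1"
    by (auto simp: less_Suc_eq numeral_2_eq_2)
  moreover have "cond_E M N 4 2 i a b 1 \<longleftrightarrow> cond_E M N 4 2 i a b 0"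
    unfolding cond_E_def sumM2 mods4 by (auto simp: add_mset_commute)
  ultimately show ?thesis by blast
qed

definition Tset where
  "Tset M N i = {(a, b). a \<in> {0..<4} \<rightarrow>\<^sub>E {0..<M} \<and> b \<in> {0..<4} \<rightarrow>\<^sub>E {0..<N} \<and> cond_E M N 4 2 i a b 0}"

lemma card_S:
  "card {(i, a, b). i \<in> {0..<2} \<rightarrow>\<^sub>E {0..<M} \<and> a \<in> {0..<4} \<rightarrow>\<^sub>E {0..<M}
                 \<and> b \<in> {0..<4} \<rightarrow>\<^sub>E {0..<N} \<and> (\<forall>x<2. cond_E M N 4 2 i a b x)}
   = (\<Sum>i\<in>{0..<2::nat} \<rightarrow>\<^sub>E {0..<M}. card (Tset M N i))"
proof -
  have "{(i, a, b). i \<in> {0..<2} \<rightarrow>\<^sub>E {0..<M} \<and> a \<in> {0..<4} \<rightarrow>\<^sub>E {0..<M}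
                 \<and> b \<in> {0..<4} \<rightarrow>\<^sub>E {0..<N} \<and> (\<forall>x<2. cond_E M N 4 2 i a b x)}
       = Sigma ({0..<2::nat} \<rightarrow>\<^sub>E {0..<M}) (Tset M N)"
    unfolding Tset_def condE_0 by auto
  moreover have "finite ({0..<2::nat} \<rightarrow>\<^sub>E {0..<M::nat})" by (simp add: finite_PiE)
  moreover have "\<forall>i. finite (Tset M N i)"
    unfolding Tset_def by (intro allI finite_subset[OF _ fin_PP[of M N]]) auto
  ultimately show ?thesis by simp
qed

lemma card_T:
  assumes i: "i \<in> {0..<2::nat} \<rightarrow>\<^sub>E {0..<M}"
  shows "card (Tset M N i) = card (K M N ((i 1 + M - i 0) mod M))"
proof -
  define t where "t = (i 1 + M - i 0) mod M"
  have i0: "i 0 < M" "i 1 < M" using i by auto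
  define h where "h = (\<lambda>a::nat\<Rightarrow>nat. restrict (\<lambda>y. (i 0 + a y) mod M) {0..<4::nat})"
  define h' where "h' = (\<lambda>a::nat\<Rightarrow>nat. restrict (\<lambda>y. (a y + M - i 0) mod M) {0..<4::nat})"
  have hv: "\<And>a y. y < 4 \<Longrightarrow> h a y = (i 0 + a y) mod M" unfolding h_def by simp
  have hv4: "\<And>a. h a 0 = (i 0 + a 0) mod M" "\<And>a. h a 1 = (i 0 + a 1) mod M"
    "\<And>a. h a 2 = (i 0 + a 2) mod M" "\<And>a. h a 3 = (i 0 + a 3) mod M" by (simp_all add: hv)
  have sh: "\<And>x. (t + (i 0 + x) mod M) mod M = (i 1 + x) mod M" unfolding t_def using shift_mod[OF i0(1)] .
  have cond: "\<And>a b. cond_E M N 4 2 i a b 0 \<longleftrightarrow> Ct M t (h a) b"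
    unfolding cond_E_def Ct_def sumM2 mods4 hv4 sh by simp
  have hPi: "\<And>a. h a \<in> {0..<4} \<rightarrow>\<^sub>E {0..<M}" using i0 unfolding h_def by auto
  have h'Pi: "\<And>a. h' a \<in> {0..<4} \<rightarrow>\<^sub>E {0..<M}" using i0 unfolding h'_def by auto
  have hh': "\<And>a. a \<in> {0..<4} \<rightarrow>\<^sub>E {0..<M} \<Longrightarrow> h' (h a) = a"
  proof
    fix a y assume a: "a \<in> {0..<4::nat} \<rightarrow>\<^sub>E {0..<M}"
    show "h' (h a) y = a y"
    proof (cases "y < 4")
      case True
      hence "a y < M" using a by auto
      thus ?thesis using True mod_back[OF i0(1), of "a y"] unfolding h'_def h_def by auto
    next
      case False thus ?thesis using PiE_arb[OF a, of y] unfolding h'_def by simp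
    qed
  qed
  have h'h: "\<And>a. a \<in> {0..<4} \<rightarrow>\<^sub>E {0..<M} \<Longrightarrow> h (h' a) = a"
  proof
    fix a y assume a: "a \<in> {0..<4::nat} \<rightarrow>\<^sub>E {0..<M}"
    show "h (h' a) y = a y"
    proof (cases "y < 4")
      case True
      hence "a y < M" using a by auto
      thus ?thesis using True mod_fwd[OF i0(1), of "a y"] unfolding h'_def h_def by auto
    next
      case False thus ?thesis using PiE_arb[OF a, of y] unfolding h_def by simp
    qed
  qed
  have "bij_betw (\<lambda>(a, b). (h a, b)) (Tset M N i) (K M N t)"
  proof (rule bij_betw_byWitness[where f' = "\<lambda>(a, b). (h' a, b)"])
    show "\<forall>x\<in>Tset M N i. (case (case x of (a, b) \<Rightarrow> (h a, b)) of (a, b) \<Rightarrow> (h' a, b)) = x"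
      unfolding Tset_def using hh' by auto
    show "\<forall>x\<in>K M N t. (case (case x of (a, b) \<Rightarrow> (h' a, b)) of (a, b) \<Rightarrow> (h a, b)) = x"
      unfolding K_def using h'h by auto
    show "(\<lambda>(a, b). (h a, b)) ` Tset M N i \<subseteq> K M N t"
      unfolding Tset_def K_def using cond hPi by auto
    show "(\<lambda>(a, b). (h' a, b)) ` K M N t \<subseteq> Tset M N i"
    proof clarify
      fix a b assume "(a, b) \<in> K M N t"
      hence a: "a \<in> {0..<4} \<rightarrow>\<^sub>E {0..<M}" "b \<in> {0..<4} \<rightarrow>\<^sub>E {0..<N}" "Ct M t a b" unfolding K_def by auto
      thus "(h' a, b) \<in> Tset M N i" unfolding Tset_def using cond[of "h' a" b] h'h[OF a(1)] h'Pi by auto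
    qed
  qed
  thus ?thesis unfolding t_def by (rule bij_betw_same_card)
qed



lemma sum_if_half:
  assumes "M \<ge> (1::nat)"
  shows "(\<Sum>t\<in>{1..<M}. (if 2*t = M then c else 0::nat)) = (if even M then c else 0)"
proof -
  have "(\<Sum>t\<in>{1..<M}. (if 2*t = M then c else 0::nat)) = (\<Sum>t\<in>{1..<M}. (if t = M div 2 then (if even M then c else 0) else 0))"
    by (rule sum.cong) auto
  also have "\<dots> = (if M div 2 \<in> {1..<M} then (if even M then c else 0) else 0)" by (simp add: sum.delta)
  also have "\<dots> = (if even M then c else 0)"
  proof (cases "even M")
    case True
    hence "M \<ge> 2" using assms by presburger
    hence "M div 2 \<in> {1..<M}" by auto
    thus ?thesis by simp
  qed simp
  finally show ?thesis .
qed

lemma sum_K: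
  assumes M: "M \<ge> 1"
  shows "(\<Sum>t<M. card (K M N t)) = M^4*N^4 + (M-1)*card (Dset M N) + (if even M then M*(M-2)*(N*(N-1)) else 0)"
proof -
  have "(\<Sum>t<M. card (K M N t)) = (\<Sum>t\<in>{0..<M}. card (K M N t))" by (simp add: lessThan_atLeast0)
  also have "\<dots> = card (K M N 0) + (\<Sum>t\<in>{1..<M}. card (K M N t))"
    using M by (subst sum.atLeast_Suc_lessThan) auto
  also have "(\<Sum>t\<in>{1..<M}. card (K M N t)) = (\<Sum>t\<in>{1..<M}. card (Dset M N) + (if 2*t = M then M*(M-2)*(N*(N-1)) else 0))"
    by (rule sum.cong) (auto simp: card_Kt card_Sp)
  also have "\<dots> = (M-1)*card (Dset M N) + (if even M then M*(M-2)*(N*(N-1)) else 0)"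
    unfolding sum.distrib sum_if_half[OF M] by simp
  finally show ?thesis by (simp add: card_K0)
qed

theorem theorem4p1:
  fixes M N :: nat
  assumes "M \<ge> 1" and "N \<ge> 1"
  shows "d_pr 4 2 M N = beta42 M N
           + (if even M then 1 else 0) * ((real M - 2) * (real N - 1) / (real M ^ 4 * real N ^ 3))"
proof -
  define D where "D = card (Dset M N)"
  have cS: "card {(i, a, b). i \<in> {0..<2} \<rightarrow>\<^sub>E {0..<M} \<and> a \<in> {0..<4} \<rightarrow>\<^sub>E {0..<M}
                 \<and> b \<in> {0..<4} \<rightarrow>\<^sub>E {0..<N} \<and> (\<forall>x<2. cond_E M N 4 2 i a b x)}
     = M * (M^4*N^4 + (M-1)*D + (if even M then M*(M-2)*(N*(N-1)) else 0))"
  proof -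
    have "(\<Sum>i\<in>{0..<2::nat} \<rightarrow>\<^sub>E {0..<M}. card (Tset M N i))
        = (\<Sum>i\<in>{0..<2::nat} \<rightarrow>\<^sub>E {0..<M}. card (K M N ((i 1 + M - i 0) mod M)))"
      by (rule sum.cong) (auto simp: card_T)
    also have "\<dots> = M * (\<Sum>t<M. card (K M N t))" by (rule sum_PI)
    finally show ?thesis using card_S sum_K[OF assms(1)] unfolding D_def by simp
  qed
  have dp: "d_pr 4 2 M N = real (M * (M^4*N^4 + (M-1)*D + (if even M then M*(M-2)*(N*(N-1)) else 0))) / (real M ^ 6 * real N ^ 4)"
    unfolding d_pr_def cS by simp
  have dl: "delta_p 4 M N = real D / (real M * real N) ^ 4"
    unfolding delta_p_def D_def Dset_def by simp
  have Mp: "real M > 0" "real N > 0" using assms by auto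
  show ?thesis
  proof (cases "even M")
    case True
    hence M2: "M \<ge> 2" using assms by presburger
    have e: "real (M - 2) = real M - 2" "real (M - 1) = real M - 1" "real (N - 1) = real N - 1"
      using M2 assms by (simp_all add: of_nat_diff)
    show ?thesis unfolding dp beta42_def dl using True Mp e
      by (simp add: field_simps power_eq_if)
  next
    case False
    have e: "real (M - 1) = real M - 1" using assms by (simp add: of_nat_diff)
    show ?thesis unfolding dp beta42_def dl using False Mp e
      by (simp add: field_simps power_eq_if)
  qed
qed


end
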